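(* Let $0<m<L$ and $0<\alpha<2/(L+m)$. If $\delta\in[0,1)$ and \[ \rho \geq \left( 1-\frac{2 \alpha L m}{L+m} + \frac{\alpha \delta^2 (L + m -2 \alpha Lm )}{2- \alpha (L+m)}\right)^{1/2}, \] then there exists $c>0$ such that for every $f \in \mathcal{S}(m,L)$ (with reference point $x_\star$), every sequence $x(k)\in\mathbb{R}^n$ and every error sequence $e(k)\in\mathbb{R}^n$ satisfying, for all $k\ge 0$, \[ x(k+1) = x(k) - \alpha\big(\nabla f(x(k)) + e(k)\big), \qquad |e(k)| \leq \delta\, |\nabla f(x(k))|, \] we have $|x(k)-x_\star| \leq c\, \rho^k\, |x(0)-x_\star|$ for all $k \geq 0$.
   Context: For $0\le m<L$, $\mathcal{S}(m,L)$ denotes the set of $C^1$ functions $f:\mathbb{R}^n\to\mathbb{R}$ for which there is a reference point $x_\star\in\mathbb{R}^n$ such that for every $x\in\mathbb{R}^n$, $\langle m(x-x_\star) - \nabla f(x),\ L(x-x_\star) - \nabla f(x)\rangle \le 0$. The constant $c$ may depend on $m,L,\alpha,\delta,\rho$ but not on $f$, $x$ or $e$. *)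

theory Defs
  imports "HOL-Analysis.Analysis"
begin

definition C1_with_gradient :: "(real^'n \<Rightarrow> real) \<Rightarrow> (real^'n \<Rightarrow> real^'n) \<Rightarrow> bool" where
  "C1_with_gradient f grad \<longleftrightarrow>
     (\<forall>x. (f has_derivative (\<lambda>h. grad x \<bullet> h)) (at x)) \<and> continuous_on UNIV grad"

definition in_S_class :: "real \<Rightarrow> real \<Rightarrow> (real^'n \<Rightarrow> real) \<Rightarrow> (real^'n \<Rightarrow> real^'n) \<Rightarrow> real^'n \<Rightarrow> bool" where
  "in_S_class m L f grad xs \<longleftrightarrow> C1_with_gradient f grad \<and>
     (\<forall>x. (m *\<^sub>R (x - xs) - grad x) \<bullet> (L *\<^sub>R (x - xs) - grad x) \<le> 0)"

end

theory Submission
  imports Defs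
begin

lemma step_real:
  fixes m L \<alpha> \<delta> a b p nz ne en :: real
  assumes "0 < m" "m < L" "0 < \<alpha>" "\<alpha> < 2 / (L + m)" "0 \<le> \<delta>"
    and sec: "m * L * a\<^sup>2 - (L + m) * p + b\<^sup>2 \<le> 0"
    and nz: "nz\<^sup>2 = a\<^sup>2 - 2 * \<alpha> * p + \<alpha>\<^sup>2 * b\<^sup>2" "0 \<le> nz" "0 \<le> b"
    and en: "en \<le> \<delta> * b * nz" and ne: "ne \<le> \<delta>\<^sup>2 * b\<^sup>2"
  shows "nz\<^sup>2 + 2 * \<alpha> * en + \<alpha>\<^sup>2 * ne \<le> (1 - 2 * \<alpha> * L * m / (L + m)
                 + \<alpha> * \<delta>\<^sup>2 * (L + m - 2 * \<alpha> * L * m) / (2 - \<alpha> * (L + m))) * a\<^sup>2"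
proof -
  have LM: "L + m > 0" using assms by simp
  have D: "2 - \<alpha> * (L + m) > 0" using assms(4) LM by (simp add: field_simps)
  define K where "K = (L + m) / (2 - \<alpha> * (L + m))"
  have K: "K > 0" using LM D by (simp add: K_def)
  have amgm: "2 * \<delta> * b * nz \<le> \<delta>\<^sup>2 * K * nz\<^sup>2 + b\<^sup>2 / K"
  proof -
    have "0 \<le> (\<delta> * K * nz - b)\<^sup>2" by simp
    hence "2 * \<delta> * K * b * nz \<le> \<delta>\<^sup>2 * K * K * nz\<^sup>2 + b\<^sup>2" by (simp add: power2_eq_square algebra_simps)
    moreover have "(\<delta>\<^sup>2 * K * nz\<^sup>2 + b\<^sup>2 / K) * K = \<delta>\<^sup>2 * K * K * nz\<^sup>2 + b\<^sup>2" using K by (simp add: field_simps power2_eq_square)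
    ultimately have "(2 * \<delta> * b * nz) * K \<le> (\<delta>\<^sup>2 * K * nz\<^sup>2 + b\<^sup>2 / K) * K" by (simp add: algebra_simps)
    thus ?thesis using K by simp
  qed
  have sec2: "2 * \<alpha> * p \<ge> 2 * \<alpha> * (m * L * a\<^sup>2 + b\<^sup>2) / (L + m)"
  proof -
    have "(m * L * a\<^sup>2 + b\<^sup>2) / (L + m) \<le> p" using sec LM by (simp add: field_simps)
    hence "(2 * \<alpha>) * ((m * L * a\<^sup>2 + b\<^sup>2) / (L + m)) \<le> (2 * \<alpha>) * p" using assms(3) by (intro mult_left_mono) auto
    thus ?thesis by simp
  qed
  have LM0: "L + m \<noteq> 0" using LM by simp
  have aK: "\<alpha> / K = \<alpha> * (2 - \<alpha> * (L + m)) / (L + m)" using D LM by (simp add: K_def field_simps)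
  have z2: "nz\<^sup>2 \<le> (1 - 2 * \<alpha> * L * m / (L + m)) * a\<^sup>2 - (\<alpha> / K) * b\<^sup>2"
  proof -
    have "nz\<^sup>2 \<le> a\<^sup>2 - 2 * \<alpha> * (m * L * a\<^sup>2 + b\<^sup>2) / (L + m) + \<alpha>\<^sup>2 * b\<^sup>2" using nz sec2 by linarith
    also have "\<dots> = (1 - 2 * \<alpha> * L * m / (L + m)) * a\<^sup>2 - (\<alpha> / K) * b\<^sup>2"
    proof -
      have "\<And>s::real. s \<noteq> 0 \<Longrightarrow> a\<^sup>2 - 2 * \<alpha> * (m * L * a\<^sup>2 + b\<^sup>2) / s + \<alpha>\<^sup>2 * b\<^sup>2 = (1 - 2 * \<alpha> * L * m / s) * a\<^sup>2 - \<alpha> * (2 - \<alpha> * s) / s * b\<^sup>2"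
        by (simp add: field_simps power2_eq_square)
      from this[OF LM0] show ?thesis unfolding aK .
    qed
    finally show ?thesis .
  qed
  have "nz\<^sup>2 + 2 * \<alpha> * en + \<alpha>\<^sup>2 * ne \<le> nz\<^sup>2 + \<alpha> * (2 * \<delta> * b * nz) + \<alpha>\<^sup>2 * (\<delta>\<^sup>2 * b\<^sup>2)"
  proof -
    have "\<alpha> * en \<le> \<alpha> * (\<delta> * b * nz)" using en assms(3) by (intro mult_left_mono) auto
    moreover have "\<alpha>\<^sup>2 * ne \<le> \<alpha>\<^sup>2 * (\<delta>\<^sup>2 * b\<^sup>2)" using ne by (intro mult_left_mono) auto
    ultimately show ?thesis by simp
  qed
  also have "\<dots> \<le> nz\<^sup>2 + \<alpha> * (\<delta>\<^sup>2 * K * nz\<^sup>2 + b\<^sup>2 / K) + \<alpha>\<^sup>2 * (\<delta>\<^sup>2 * b\<^sup>2)"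
  proof -
    have "\<alpha> * (2 * \<delta> * b * nz) \<le> \<alpha> * (\<delta>\<^sup>2 * K * nz\<^sup>2 + b\<^sup>2 / K)" using amgm assms(3) by (intro mult_left_mono) auto
    thus ?thesis by simp
  qed
  also have "\<dots> = (1 + \<alpha> * \<delta>\<^sup>2 * K) * nz\<^sup>2 + (\<alpha> / K + \<alpha>\<^sup>2 * \<delta>\<^sup>2) * b\<^sup>2"
    by (simp add: algebra_simps)
  also have "\<dots> \<le> (1 + \<alpha> * \<delta>\<^sup>2 * K) * ((1 - 2 * \<alpha> * L * m / (L + m)) * a\<^sup>2 - (\<alpha> / K) * b\<^sup>2) + (\<alpha> / K + \<alpha>\<^sup>2 * \<delta>\<^sup>2) * b\<^sup>2"
  proof -
    have "0 \<le> 1 + \<alpha> * \<delta>\<^sup>2 * K" using K assms(3) by simp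
    hence "(1 + \<alpha> * \<delta>\<^sup>2 * K) * nz\<^sup>2 \<le> (1 + \<alpha> * \<delta>\<^sup>2 * K) * ((1 - 2 * \<alpha> * L * m / (L + m)) * a\<^sup>2 - (\<alpha> / K) * b\<^sup>2)" using z2 by (intro mult_left_mono) auto
    thus ?thesis by simp
  qed
  also have "\<dots> = (1 - 2 * \<alpha> * L * m / (L + m)
                 + \<alpha> * \<delta>\<^sup>2 * (L + m - 2 * \<alpha> * L * m) / (2 - \<alpha> * (L + m))) * a\<^sup>2"
  proof -
    have "\<And>s::real. s \<noteq> 0 \<Longrightarrow> 2 - \<alpha> * s \<noteq> 0 \<Longrightarrow> (1 + \<alpha> * \<delta>\<^sup>2 * (s / (2 - \<alpha> * s))) * ((1 - 2 * \<alpha> * L * m / s) * a\<^sup>2 - (\<alpha> * (2 - \<alpha> * s) / s) * b\<^sup>2) + (\<alpha> * (2 - \<alpha> * s) / s + \<alpha>\<^sup>2 * \<delta>\<^sup>2) * b\<^sup>2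
       = (1 - 2 * \<alpha> * L * m / s + \<alpha> * \<delta>\<^sup>2 * (s - 2 * \<alpha> * L * m) / (2 - \<alpha> * s)) * a\<^sup>2"
      by (simp add: field_simps power2_eq_square)
    from this[OF LM0] D show ?thesis unfolding aK by (simp add: K_def)
  qed
  finally show ?thesis .
qed

lemma step_vec:
  fixes y g e :: "'a::real_inner" and m L \<alpha> \<delta> :: real
  assumes "0 < m" "m < L" "0 < \<alpha>" "\<alpha> < 2 / (L + m)" "0 \<le> \<delta>"
    and sec: "(m *\<^sub>R y - g) \<bullet> (L *\<^sub>R y - g) \<le> 0"
    and ne: "norm e \<le> \<delta> * norm g"
  shows "norm (y - \<alpha> *\<^sub>R (g + e)) \<le> sqrt (1 - 2 * \<alpha> * L * m / (L + m)
                 + \<alpha> * \<delta>\<^sup>2 * (L + m - 2 * \<alpha> * L * m) / (2 - \<alpha> * (L + m))) * norm y"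
proof -
  define E where "E = 1 - 2 * \<alpha> * L * m / (L + m)
                 + \<alpha> * \<delta>\<^sup>2 * (L + m - 2 * \<alpha> * L * m) / (2 - \<alpha> * (L + m))"
  define z where "z = y - \<alpha> *\<^sub>R g"
  have eq: "y - \<alpha> *\<^sub>R (g + e) = z - \<alpha> *\<^sub>R e" by (simp add: z_def algebra_simps)
  have n1: "(norm (z - \<alpha> *\<^sub>R e))\<^sup>2 = (norm z)\<^sup>2 + 2 * \<alpha> * (- (z \<bullet> e)) + \<alpha>\<^sup>2 * (norm e)\<^sup>2"
    unfolding power2_norm_eq_inner by (simp add: inner_diff_left inner_diff_right algebra_simps power2_eq_square inner_commute)
  have n2: "(norm z)\<^sup>2 = (norm y)\<^sup>2 - 2 * \<alpha> * (y \<bullet> g) + \<alpha>\<^sup>2 * (norm g)\<^sup>2"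
    unfolding z_def power2_norm_eq_inner by (simp add: inner_diff_left inner_diff_right algebra_simps power2_eq_square inner_commute)
  have s2: "m * L * (norm y)\<^sup>2 - (L + m) * (y \<bullet> g) + (norm g)\<^sup>2 \<le> 0"
  proof -
    have "(m *\<^sub>R y - g) \<bullet> (L *\<^sub>R y - g) = m * L * (norm y)\<^sup>2 - (L + m) * (y \<bullet> g) + (norm g)\<^sup>2"
      by (simp add: power2_norm_eq_inner inner_diff_left inner_diff_right algebra_simps inner_commute)
    thus ?thesis using sec by simp
  qed
  have en: "- (z \<bullet> e) \<le> \<delta> * norm g * norm z"
  proof -
    have "- (z \<bullet> e) \<le> norm z * norm e"
      using Cauchy_Schwarz_ineq2[of z e] by (simp add: abs_le_iff)
    also have "\<dots> \<le> norm z * (\<delta> * norm g)" using ne by (intro mult_left_mono) auto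
    finally show ?thesis by (simp add: algebra_simps)
  qed
  have ne2: "(norm e)\<^sup>2 \<le> \<delta>\<^sup>2 * (norm g)\<^sup>2"
  proof -
    have "(norm e)\<^sup>2 \<le> (\<delta> * norm g)\<^sup>2" using ne by (intro power_mono) auto
    thus ?thesis by (simp add: power_mult_distrib)
  qed
  have main: "(norm (z - \<alpha> *\<^sub>R e))\<^sup>2 \<le> E * (norm y)\<^sup>2"
    unfolding n1 E_def
    by (rule step_real[OF assms(1-5) s2 n2 norm_ge_zero norm_ge_zero en ne2])
  have "norm (z - \<alpha> *\<^sub>R e) = sqrt ((norm (z - \<alpha> *\<^sub>R e))\<^sup>2)" by simp
  also have "\<dots> \<le> sqrt (E * (norm y)\<^sup>2)" using main by (rule real_sqrt_le_mono)
  also have "\<dots> = sqrt E * norm y" by (simp add: real_sqrt_mult)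
  finally show ?thesis using eq E_def by simp
qed

lemma E_nonneg:
  fixes m L \<alpha> \<delta> :: real
  assumes "0 < m" "m < L" "0 < \<alpha>" "\<alpha> < 2 / (L + m)" "0 \<le> \<delta>"
  shows "0 \<le> 1 - 2 * \<alpha> * L * m / (L + m)
                 + \<alpha> * \<delta>\<^sup>2 * (L + m - 2 * \<alpha> * L * m) / (2 - \<alpha> * (L + m))"
proof -
  have LM: "L + m > 0" using assms by simp
  have a2: "\<alpha> * (L + m) < 2" using assms(4) LM by (simp add: field_simps)
  have D: "2 - \<alpha> * (L + m) > 0" using a2 by simp
  have LmLm: "4 * L * m \<le> (L + m)\<^sup>2"
  proof -
    have "0 \<le> (L - m)\<^sup>2" by simp
    thus ?thesis by (simp add: power2_eq_square algebra_simps)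
  qed
  have t1: "2 * \<alpha> * L * m \<le> L + m"
  proof -
    have "2 * \<alpha> * L * m * (L + m) = (\<alpha> * (L + m)) * (2 * L * m)" by (simp add: algebra_simps)
    also have "\<dots> \<le> 2 * (2 * L * m)" using a2 assms by (intro mult_right_mono) auto
    also have "\<dots> \<le> (L + m) * (L + m)" using LmLm by (simp add: power2_eq_square)
    finally show ?thesis using LM by simp
  qed
  have "2 * \<alpha> * L * m / (L + m) \<le> 1" using t1 LM by (simp add: divide_le_eq)
  moreover have "0 \<le> \<alpha> * \<delta>\<^sup>2 * (L + m - 2 * \<alpha> * L * m) / (2 - \<alpha> * (L + m))"
    using t1 D assms by (intro divide_nonneg_pos mult_nonneg_nonneg) auto
  ultimately show ?thesis by simp
qed

theorem proposition1p2:
  fixes m L \<alpha> \<delta> \<rho> :: real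
  assumes "0 < m" "m < L"
    and "0 < \<alpha>" "\<alpha> < 2 / (L + m)"
    and "0 \<le> \<delta>" "\<delta> < 1"
    and "\<rho> \<ge> sqrt (1 - 2 * \<alpha> * L * m / (L + m)
                 + \<alpha> * \<delta>\<^sup>2 * (L + m - 2 * \<alpha> * L * m) / (2 - \<alpha> * (L + m)))"
  shows "\<exists>c>0. \<forall>(f :: real^'n \<Rightarrow> real) grad xs (x :: nat \<Rightarrow> real^'n) (e :: nat \<Rightarrow> real^'n).
           in_S_class m L f grad xs \<longrightarrow>
           (\<forall>k. x (Suc k) = x k - \<alpha> *\<^sub>R (grad (x k) + e k)) \<longrightarrow>
           (\<forall>k. norm (e k) \<le> \<delta> * norm (grad (x k))) \<longrightarrow>
           (\<forall>k. norm (x k - xs) \<le> c * \<rho> ^ k * norm (x 0 - xs))"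
proof (rule exI[of _ 1], intro conjI allI impI)
  define E where "E = 1 - 2 * \<alpha> * L * m / (L + m)
                 + \<alpha> * \<delta>\<^sup>2 * (L + m - 2 * \<alpha> * L * m) / (2 - \<alpha> * (L + m))"
  have E0: "0 \<le> sqrt E" using E_nonneg[OF assms(1-5)] E_def by simp
  have rho: "sqrt E \<le> \<rho>" using assms(7) E_def by simp
  fix f :: "real^'n \<Rightarrow> real" and grad xs and x :: "nat \<Rightarrow> real^'n" and e :: "nat \<Rightarrow> real^'n" and k :: nat
  assume S: "in_S_class m L f grad xs"
    and it: "\<forall>k. x (Suc k) = x k - \<alpha> *\<^sub>R (grad (x k) + e k)"
    and er: "\<forall>k. norm (e k) \<le> \<delta> * norm (grad (x k))"
  have st: "norm (x (Suc j) - xs) \<le> \<rho> * norm (x j - xs)" for j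
  proof -
    have sec: "(m *\<^sub>R (x j - xs) - grad (x j)) \<bullet> (L *\<^sub>R (x j - xs) - grad (x j)) \<le> 0"
      using S unfolding in_S_class_def by blast
    have eqx: "x (Suc j) - xs = (x j - xs) - \<alpha> *\<^sub>R (grad (x j) + e j)" using it by simp
    have "norm (x (Suc j) - xs) \<le> sqrt E * norm (x j - xs)"
      unfolding eqx E_def by (rule step_vec[OF assms(1-5) sec er[rule_format, of j]])
    also have "\<dots> \<le> \<rho> * norm (x j - xs)" using rho by (intro mult_right_mono) auto
    finally show ?thesis .
  qed
  have r0: "0 \<le> \<rho>" using E0 rho by linarith
  show "norm (x k - xs) \<le> 1 * \<rho> ^ k * norm (x 0 - xs)"
  proof (induction k)
    case 0 then show ?case by simp
  next
    case (Suc k)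
    have "norm (x (Suc k) - xs) \<le> \<rho> * norm (x k - xs)" by (rule st)
    also have "\<dots> \<le> \<rho> * (1 * \<rho> ^ k * norm (x 0 - xs))" using Suc r0 by (intro mult_left_mono) auto
    finally show ?case by (simp add: algebra_simps)
  qed
qed simp

end
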